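(* Let $G\le\mathrm{Aut}(\mathcal{T}_d)$ be a $d$-persistent self-similar group. Whenever two triples $(T_-,\sigma(g_1,\dots,g_n),T_+)$ and $(T_-',\sigma'(g_1',\dots,g_{n'}'),T_+')$ (with all $g_i,g_j'\in G$) represent the same element of $V_d(G)$, we have $g_n=g'_{n'}$.
   Context: Let $X=\{1,\dots,d\}$ ($d\ge2$) with its usual order; $X^*$ is the vertex set of the rooted $d$-ary tree $\mathcal{T}_d$ (root the empty word, $u$ adjacent to $ux$), ordered lexicographically. Every $f\in\mathrm{Aut}(\mathcal{T}_d)$ has a wreath recursion $f=\rho(f)(f_1,\dots,f_d)$ with $\rho(f)\in S_d$ and $f_i$ determined by $f(iw)=\rho(f)(i)f_i(w)$; the states of $f$ form the smallest set containing $f$ and closed under $f\mapsto f_i$. $G$ is self-similar if it contains all states of its elements, and $d$-persistent if $g_d=g$ for every $g\in G$ with wreath recursion $g=\rho(g)(g_1,\dots,g_d)$. With $X^\omega$ the infinite words, a triple $(T_-,\sigma(g_1,\dots,g_n),T_+)$ consists of finite complete rooted subtrees $T_-,T_+$ (rooted: contain the root; complete: $ux\in T$ implies $uy\in T$ for all $y$) with $n$ leaves $u_1,\dots,u_n$ resp. $v_1,\dots,v_n$ in lexicographic order, $\sigma\in S_n$, $g_i\in G$; it represents the homeomorphism of $X^\omega$ with $v_iw\mapsto u_{\sigma(i)}g_i(w)$. $V_d(G)$ is the group of all homeomorphisms so represented. *)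

theory Defs
  imports Main "HOL-Library.List_Lexorder"
begin

text \<open>Alphabet X = {1..d}; finite words are nat lists over X (vertices of T_d),
 infinite words are functions nat => nat with values in X.  The order on lists
 from List_Lexorder is the lexicographic order.\<close>

definition words :: "nat \<Rightarrow> nat list set" where
  "words d = {w. set w \<subseteq> {1..d}}"

definition infwords :: "nat \<Rightarrow> (nat \<Rightarrow> nat) set" where
  "infwords d = {w. \<forall>k. w k \<in> {1..d}}"

definition stake :: "nat \<Rightarrow> (nat \<Rightarrow> nat) \<Rightarrow> nat list" where
  "stake n w = map w [0..<n]"

definition tree_aut :: "nat \<Rightarrow> (nat list \<Rightarrow> nat list) \<Rightarrow> bool" where
  "tree_aut d f \<longleftrightarrow> bij_betw f (words d) (words d) \<and> f [] = [] \<and>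
     (\<forall>u\<in>words d. \<forall>x\<in>{1..d}. \<exists>y\<in>{1..d}. f (u @ [x]) = f u @ [y]) \<and>
     (\<forall>w. w \<notin> words d \<longrightarrow> f w = w)"

text \<open>The state f_i of f: f(i w) = rho(f)(i) f_i(w).\<close>
definition state_of :: "nat \<Rightarrow> (nat list \<Rightarrow> nat list) \<Rightarrow> nat \<Rightarrow> (nat list \<Rightarrow> nat list)" where
  "state_of d f i = (\<lambda>w. if w \<in> words d then tl (f (i # w)) else w)"

definition aut_subgroup :: "nat \<Rightarrow> (nat list \<Rightarrow> nat list) set \<Rightarrow> bool" where
  "aut_subgroup d G \<longleftrightarrow> (\<forall>g\<in>G. tree_aut d g) \<and> id \<in> G \<and>
     (\<forall>g\<in>G. \<forall>h\<in>G. g \<circ> h \<in> G) \<and> (\<forall>g\<in>G. inv g \<in> G)"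

definition self_similar :: "nat \<Rightarrow> (nat list \<Rightarrow> nat list) set \<Rightarrow> bool" where
  "self_similar d G \<longleftrightarrow> (\<forall>g\<in>G. \<forall>i\<in>{1..d}. state_of d g i \<in> G)"

definition persistent :: "nat \<Rightarrow> (nat list \<Rightarrow> nat list) set \<Rightarrow> bool" where
  "persistent d G \<longleftrightarrow> (\<forall>g\<in>G. state_of d g d = g)"

definition aut_inf :: "(nat list \<Rightarrow> nat list) \<Rightarrow> (nat \<Rightarrow> nat) \<Rightarrow> (nat \<Rightarrow> nat)" where
  "aut_inf f w = (\<lambda>k. f (stake (Suc k) w) ! k)"

definition fcr_subtree :: "nat \<Rightarrow> nat list set \<Rightarrow> bool" where
  "fcr_subtree d T \<longleftrightarrow> T \<subseteq> words d \<and> finite T \<and> [] \<in> T \<and>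
     (\<forall>u x. u @ [x] \<in> T \<longrightarrow> u \<in> T) \<and>
     (\<forall>u x. u @ [x] \<in> T \<longrightarrow> (\<forall>y\<in>{1..d}. u @ [y] \<in> T))"

definition leaves :: "nat list set \<Rightarrow> nat list set" where
  "leaves T = {u\<in>T. \<forall>x. u @ [x] \<notin> T}"

definition leaf_list :: "nat list set \<Rightarrow> nat list list" where
  "leaf_list T = sorted_list_of_set (leaves T)"

text \<open>A triple (T_-, sigma(g_1..g_n), T_+) with 0-based indices: sigma is a
 permutation of {0..<n}, gs = [g_1,...,g_n].\<close>
definition valid_triple :: "nat \<Rightarrow> (nat list \<Rightarrow> nat list) set \<Rightarrow> nat list set \<Rightarrow> (nat \<Rightarrow> nat)
     \<Rightarrow> (nat list \<Rightarrow> nat list) list \<Rightarrow> nat list set \<Rightarrow> bool" where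
  "valid_triple d G Tm \<sigma> gs Tp \<longleftrightarrow> fcr_subtree d Tm \<and> fcr_subtree d Tp \<and>
     card (leaves Tm) = length gs \<and> card (leaves Tp) = length gs \<and>
     bij_betw \<sigma> {..<length gs} {..<length gs} \<and> set gs \<subseteq> G"

text \<open>The homeomorphism represented: v_i w |-> u_{sigma i} g_i(w).\<close>
definition triple_map :: "nat list set \<Rightarrow> (nat \<Rightarrow> nat) \<Rightarrow> (nat list \<Rightarrow> nat list) list
     \<Rightarrow> nat list set \<Rightarrow> (nat \<Rightarrow> nat) \<Rightarrow> (nat \<Rightarrow> nat)" where
  "triple_map Tm \<sigma> gs Tp w =
    (let us = leaf_list Tm; vs = leaf_list Tp in
     if \<exists>i<length vs. stake (length (vs ! i)) w = vs ! i then
       (let i = (SOME i. i < length vs \<and> stake (length (vs ! i)) w = vs ! i);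
            v = vs ! i; u = us ! \<sigma> i;
            z = aut_inf (gs ! i) (\<lambda>k. w (k + length v))
        in (\<lambda>k. if k < length u then u ! k else z (k - length u)))
     else w)"

end

theory Submission imports Defs begin

definition pre :: "nat list \<Rightarrow> (nat \<Rightarrow> nat) \<Rightarrow> (nat \<Rightarrow> nat)" where
  "pre xs w = (\<lambda>j. if j < length xs then xs ! j else w (j - length xs))"

lemma pre_pre: "pre a (pre b w) = pre (a @ b) w"
  by (auto simp: pre_def nth_append fun_eq_iff)

lemma pre_inf: "xs \<in> words d \<Longrightarrow> w \<in> infwords d \<Longrightarrow> pre xs w \<in> infwords d"
  by (auto simp: pre_def words_def infwords_def dest!: nth_mem)

lemma stake_pre: "stake (length xs + m) (pre xs w) = xs @ stake m w"
  by (rule nth_equalityI) (auto simp: stake_def pre_def nth_append)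

lemma stake_words: "w \<in> infwords d \<Longrightarrow> stake n w \<in> words d"
  by (auto simp: stake_def words_def infwords_def)

lemma take_stake: "take a (stake b w) = stake (min a b) w"
  by (simp add: stake_def take_map take_upt min_def)

lemma words_append: "a @ b \<in> words d \<longleftrightarrow> a \<in> words d \<and> b \<in> words d"
  by (auto simp: words_def)

lemma taut_len: "tree_aut d g \<Longrightarrow> x \<in> words d \<Longrightarrow> length (g x) = length x"
proof (induction x rule: rev_induct)
  case Nil then show ?case by (simp add: tree_aut_def)
next
  case (snoc a x)
  then have "x \<in> words d" "a \<in> {1..d}" by (auto simp: words_def)
  with snoc(2) obtain y where "g (x @ [a]) = g x @ [y]" unfolding tree_aut_def by blast
  with snoc show ?case using \<open>x \<in> words d\<close> by simp
qed

lemma taut_app: "tree_aut d g \<Longrightarrow> a @ b \<in> words d \<Longrightarrow> \<exists>c. g (a @ b) = g a @ c"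
proof (induction b rule: rev_induct)
  case Nil then show ?case by simp
next
  case (snoc x b)
  then have "a @ b \<in> words d" "x \<in> {1..d}" by (auto simp: words_def)
  with snoc(2) obtain y where "g ((a @ b) @ [x]) = g (a @ b) @ [y]" unfolding tree_aut_def by blast
  with snoc \<open>a @ b \<in> words d\<close> show ?case by auto
qed

lemma taut_nth: "tree_aut d g \<Longrightarrow> x \<in> words d \<Longrightarrow> j < m \<Longrightarrow> m \<le> length x \<Longrightarrow>
   g x ! j = g (take m x) ! j"
proof -
  assume t: "tree_aut d g" and x: "x \<in> words d" and j: "j < m" "m \<le> length x"
  have "take m x @ drop m x \<in> words d" using x by simp
  then obtain c where c: "g x = g (take m x) @ c" using taut_app[OF t] by (metis append_take_drop_id)
  have "take m x \<in> words d" using x by (metis append_take_drop_id words_append)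
  then have "length (g (take m x)) = m" using taut_len[OF t] j by simp
  then show ?thesis using c j by (simp add: nth_append)
qed

lemma aut_inf_stake: "tree_aut d g \<Longrightarrow> w \<in> infwords d \<Longrightarrow> j < N \<Longrightarrow> aut_inf g w j = g (stake N w) ! j"
proof -
  assume t: "tree_aut d g" and w: "w \<in> infwords d" and j: "j < N"
  have "g (stake N w) ! j = g (take (Suc j) (stake N w)) ! j"
    by (rule taut_nth[OF t stake_words[OF w]]) (use j in \<open>auto simp: stake_def\<close>)
  also have "take (Suc j) (stake N w) = stake (Suc j) w" using j by (simp add: take_stake)
  finally show ?thesis by (simp add: aut_inf_def)
qed

lemma aut_inf_det:
  assumes t: "tree_aut d g" and t': "tree_aut d g'" and d: "d \<ge> 1"
    and eq: "\<forall>w\<in>infwords d. aut_inf g w = aut_inf g' w"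
  shows "g = g'"
proof
  fix x
  show "g x = g' x"
  proof (cases "x \<in> words d")
    case False then show ?thesis using t t' by (simp add: tree_aut_def)
  next
    case True
    define w where "w = pre x (\<lambda>_. 1)"
    have w: "w \<in> infwords d" unfolding w_def by (rule pre_inf[OF True]) (use d in \<open>auto simp: infwords_def\<close>)
    have sx: "stake (length x) w = x" using stake_pre[of x 0] by (simp add: w_def stake_def)
    show ?thesis
    proof (rule nth_equalityI)
      show "length (g x) = length (g' x)" using taut_len[OF t True] taut_len[OF t' True] by simp
      fix j assume "j < length (g x)"
      then have j: "j < length x" using taut_len[OF t True] by simp
      have "g x ! j = aut_inf g w j" using aut_inf_stake[OF t w j] sx by simp
      also have "\<dots> = aut_inf g' w j" using eq w by simp
      also have "\<dots> = g' x ! j" using aut_inf_stake[OF t' w j] sx by simp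
      finally show "g x ! j = g' x ! j" .
    qed
  qed
qed

lemma taut_single: "tree_aut d g \<Longrightarrow> x \<in> {1..d} \<Longrightarrow> \<exists>y\<in>{1..d}. g [x] = [y]"
  unfolding tree_aut_def using append_Nil[of "[x]"] by (metis append.left_neutral words_def empty_subsetI
      mem_Collect_eq list.set(1))

lemma pers_cons:
  assumes t: "tree_aut d g" and p: "state_of d g d = g" and y: "y \<in> words d" and d: "d \<ge> 1"
  shows "g (d # y) = g [d] @ g y"
proof -
  have dy: "[d] @ y \<in> words d" using y d by (auto simp: words_def)
  obtain c where c: "g ([d] @ y) = g [d] @ c" using taut_app[OF t dy] by blast
  obtain e where e: "g [d] = [e]" using taut_single[OF t, of d] d by auto
  have "state_of d g d y = tl (g (d # y))" using y by (simp add: state_of_def)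
  then have "g y = c" using p c e by simp
  then show ?thesis using c by simp
qed

lemma pers_rep:
  assumes t: "tree_aut d g" and p: "state_of d g d = g" and y: "y \<in> words d" and d: "d \<ge> 1"
  shows "g (replicate m d @ y) = g (replicate m d) @ g y"
proof (induction m)
  case 0 then show ?case using t by (simp add: tree_aut_def)
next
  case (Suc m)
  have r: "replicate m d \<in> words d" using d by (auto simp: words_def)
  have ry: "replicate m d @ y \<in> words d" using r y by (simp add: words_append)
  have "g (replicate (Suc m) d @ y) = g [d] @ g (replicate m d @ y)"
    using pers_cons[OF t p ry d] by simp
  also have "\<dots> = g [d] @ g (replicate m d) @ g y" using Suc by simp
  also have "\<dots> = g (replicate (Suc m) d) @ g y"
    using pers_cons[OF t p r d] by simp
  finally show ?case .
qed

lemma aut_inf_rep: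
  assumes t: "tree_aut d g" and p: "state_of d g d = g" and w: "w \<in> infwords d" and d: "d \<ge> 1"
  shows "aut_inf g (pre (replicate m d) w) = pre (g (replicate m d)) (aut_inf g w)"
proof
  fix j
  have r: "replicate m d \<in> words d" using d by (auto simp: words_def)
  have pw: "pre (replicate m d) w \<in> infwords d" by (rule pre_inf[OF r w])
  have lr: "length (g (replicate m d)) = m" using taut_len[OF t r] by simp
  have "aut_inf g (pre (replicate m d) w) j = g (stake (m + Suc j) (pre (replicate m d) w)) ! j"
    by (rule aut_inf_stake[OF t pw]) simp
  also have "\<dots> = (g (replicate m d) @ g (stake (Suc j) w)) ! j"
    using stake_pre[of "replicate m d" "Suc j" w] pers_rep[OF t p stake_words[OF w] d] by simp
  also have "\<dots> = pre (g (replicate m d)) (aut_inf g w) j"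
  proof (cases "j < m")
    case True then show ?thesis using lr by (simp add: pre_def nth_append)
  next
    case False
    have "aut_inf g w (j - m) = g (stake (Suc j) w) ! (j - m)"
      by (rule aut_inf_stake[OF t w]) (use False in auto)
    then show ?thesis using lr False by (simp add: pre_def nth_append)
  qed
  finally show "aut_inf g (pre (replicate m d) w) j = pre (g (replicate m d)) (aut_inf g w) j" .
qed


lemma fcr_prefix: "fcr_subtree d T \<Longrightarrow> a @ r \<in> T \<Longrightarrow> a \<in> T"
proof (induction r rule: rev_induct)
  case Nil then show ?case by simp
next
  case (snoc x r)
  then have "(a @ r) @ [x] \<in> T" by simp
  then have "a @ r \<in> T" using snoc(2) unfolding fcr_subtree_def by blast
  then show ?case using snoc by blast
qed

lemma leaf_prefix: "fcr_subtree d T \<Longrightarrow> a \<in> leaves T \<Longrightarrow> b \<in> leaves T \<Longrightarrow> b = a @ r \<Longrightarrow> a = b"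
proof (cases r)
  case (Cons c r')
  assume f: "fcr_subtree d T" and a: "a \<in> leaves T" and b: "b \<in> leaves T" and br: "b = a @ r"
  then have "(a @ [c]) @ r' \<in> T" using Cons by (simp add: leaves_def)
  then have "a @ [c] \<in> T" using fcr_prefix[OF f] by blast
  then show ?thesis using a by (simp add: leaves_def)
qed simp

lemma leaf_rep:
  assumes f: "fcr_subtree d T" and d: "d \<ge> 1"
  shows "\<exists>k. replicate k d \<in> leaves T"
proof -
  define S where "S = {k. replicate k d \<in> T}"
  have inj: "inj (\<lambda>k. replicate k d)" by (rule injI) (metis length_replicate)
  have "finite S" unfolding S_def using f finite_vimageI[OF _ inj, of T]
    by (simp add: fcr_subtree_def vimage_def)
  moreover have "0 \<in> S" using f by (simp add: S_def fcr_subtree_def)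
  ultimately have k: "Max S \<in> S" "\<forall>k\<in>S. k \<le> Max S" using Max_in by auto
  define k where "k = Max S"
  have "replicate k d \<in> leaves T"
  proof -
    have "replicate k d \<in> T" using k by (simp add: S_def k_def)
    moreover have "replicate k d @ [x] \<notin> T" for x
    proof
      assume "replicate k d @ [x] \<in> T"
      then have "replicate k d @ [d] \<in> T" using f d unfolding fcr_subtree_def by auto
      then have "Suc k \<in> S" by (simp add: S_def replicate_append_same)
      then show False using k k_def by auto
    qed
    ultimately show ?thesis by (simp add: leaves_def)
  qed
  then show ?thesis by blast
qed

lemma rep_max:
  assumes f: "fcr_subtree d T" and r: "replicate k d \<in> leaves T" and v: "v \<in> leaves T"
  shows "v \<le> replicate k d"
proof (rule ccontr)
  assume "\<not> v \<le> replicate k d"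
  then have "replicate k d < v" by auto
  then have "(replicate k d, v) \<in> lexord {(u, v). u < v}" by (simp add: list_less_def)
  then obtain a z where 1: "v = replicate k d @ a # z \<or>
     (\<exists>u a b x y. a < b \<and> replicate k d = u @ a # x \<and> v = u @ b # y)"
    unfolding lexord_def by blast
  show False
  proof (cases "v = replicate k d @ a # z")
    case True then show False using leaf_prefix[OF f r v True] by simp
  next
    case False
    then obtain u a b x y where 2: "a < b" "replicate k d = u @ a # x" "v = u @ b # y" using 1 by blast
    have "a \<in> set (replicate k d)" using 2 by simp
    then have "a = d" by (simp split: if_splits)
    have "b \<in> set v" using 2 by simp
    then have "b \<le> d" using v f unfolding leaves_def fcr_subtree_def words_def by fastforce
    then show False using 2 \<open>a = d\<close> by simp
  qed
qed


lemma triple_last: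
  assumes d: "d \<ge> 2" and G: "aut_subgroup d G" and P: "persistent d G"
    and V: "valid_triple d G Tm \<sigma> gs Tp"
  shows "\<exists>k. \<forall>K\<ge>k. \<exists>Q. \<forall>w\<in>infwords d.
     triple_map Tm \<sigma> gs Tp (pre (replicate K d) w) = pre Q (aut_inf (last gs) w)"
proof -
  have fp: "fcr_subtree d Tp" using V by (simp add: valid_triple_def)
  have d1: "d \<ge> 1" using d by simp
  obtain k where kl: "replicate k d \<in> leaves Tp" using leaf_rep[OF fp d1] by blast
  have finl: "finite (leaves Tp)" using fp by (simp add: fcr_subtree_def leaves_def)
  define vs where "vs = leaf_list Tp"
  define n where "n = length gs"
  have lvs: "length vs = n" using V finl by (simp add: vs_def leaf_list_def valid_triple_def n_def)
  have svs: "set vs = leaves Tp" using finl by (simp add: vs_def leaf_list_def)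
  have dvs: "distinct vs" by (simp add: vs_def leaf_list_def)
  have sorted: "sorted vs" by (simp add: vs_def leaf_list_def)
  have n1: "n \<ge> 1" using lvs svs kl by (cases vs) auto
  have vlast: "vs ! (n - 1) = replicate k d"
  proof -
    obtain i where i: "i < n" "vs ! i = replicate k d" using kl svs lvs by (metis in_set_conv_nth)
    have "vs ! i \<le> vs ! (n - 1)" using sorted i n1 lvs by (intro sorted_nth_mono) auto
    moreover have "vs ! (n - 1) \<in> leaves Tp" using svs lvs n1 by (metis diff_less less_numeral_extra(1) nth_mem order_less_le_trans)
    then have "vs ! (n - 1) \<le> replicate k d" using rep_max[OF fp kl] by blast
    ultimately show ?thesis using i by simp
  qed
  have glast: "last gs = gs ! (n - 1)" using n1 unfolding n_def by (metis last_conv_nth list.size(3) not_one_le_zero)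
  have gG: "last gs \<in> G" using V n1 unfolding valid_triple_def n_def by (metis last_in_set list.size(3) not_one_le_zero subsetD)
  then have tg: "tree_aut d (last gs)" using G by (simp add: aut_subgroup_def)
  have pg: "state_of d (last gs) d = last gs" using P gG by (simp add: persistent_def)
  show ?thesis
  proof (rule exI, intro allI impI)
    fix K assume K: "k \<le> K"
    define u where "u = leaf_list Tm ! \<sigma> (n - 1)"
    define Q where "Q = u @ last gs (replicate (K - k) d)"
    show "\<exists>Q. \<forall>w\<in>infwords d. triple_map Tm \<sigma> gs Tp (pre (replicate K d) w) = pre Q (aut_inf (last gs) w)"
    proof (intro exI ballI)
      fix w assume w: "w \<in> infwords d"
      define W where "W = pre (replicate K d) w"
      have rK: "replicate K d \<in> words d" using d by (auto simp: words_def)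
      have W: "W \<in> infwords d" using pre_inf[OF rK w] by (simp add: W_def)
      have stW: "stake L W = replicate L d" if "L \<le> K" for L
        using that by (intro nth_equalityI) (auto simp: stake_def W_def pre_def)
      have ex: "n - 1 < length vs \<and> stake (length (vs ! (n - 1))) W = vs ! (n - 1)"
        using vlast stW[OF K] lvs n1 by simp
      have uniq: "i = n - 1" if "i < length vs \<and> stake (length (vs ! i)) W = vs ! i" for i
      proof -
        have il: "vs ! i \<in> leaves Tp" using that svs by (metis nth_mem)
        define L where "L = length (vs ! i)"
        have "vs ! i = vs ! (n - 1)"
        proof (cases "L \<le> k")
          case True
          have "vs ! i = take L (stake k W)" using that True by (simp add: take_stake min_def L_def)
          also have "stake k W = vs ! (n - 1)" using vlast stW[OF K] by simp
          finally have "vs ! (n - 1) = vs ! i @ drop L (vs ! (n - 1))"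
            by (metis append_take_drop_id)
          then show ?thesis using leaf_prefix[OF fp il] vlast kl by metis
        next
          case False
          have "vs ! (n - 1) = take k (stake L W)" using vlast stW[OF K] False by (simp add: take_stake min_def)
          also have "stake L W = vs ! i" using that L_def by simp
          finally have "vs ! i = vs ! (n - 1) @ drop k (vs ! i)"
            by (metis append_take_drop_id)
          then show ?thesis using leaf_prefix[OF fp] il vlast kl by metis
        qed
        then show ?thesis using dvs that lvs n1 nth_eq_iff_index_eq[OF dvs] by auto
      qed
      have some: "(SOME i. i < length vs \<and> stake (length (vs ! i)) W = vs ! i) = n - 1"
        using some_equality[of "\<lambda>i. i < length vs \<and> stake (length (vs ! i)) W = vs ! i", OF ex uniq] by blast
      have shift: "(\<lambda>j. W (j + length (vs ! (n - 1)))) = pre (replicate (K - k) d) w"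
        using K vlast by (auto simp: W_def pre_def fun_eq_iff)
      have "triple_map Tm \<sigma> gs Tp W = pre u (aut_inf (gs ! (n - 1)) (\<lambda>j. W (j + length (vs ! (n - 1)))))"
        unfolding triple_map_def Let_def vs_def[symmetric] using ex some
        by (auto simp: pre_def u_def)
      also have "\<dots> = pre u (pre (last gs (replicate (K - k) d)) (aut_inf (last gs) w))"
        using shift aut_inf_rep[OF tg pg w d1] glast by simp
      also have "\<dots> = pre Q (aut_inf (last gs) w)" by (simp add: pre_pre Q_def)
      finally show "triple_map Tm \<sigma> gs Tp (pre (replicate K d) w) = pre Q (aut_inf (last gs) w)"
        by (simp add: W_def)
    qed
  qed
qed


lemma pre_shift_const:
  assumes d: "d \<ge> 2" and t: "tree_aut d g"
    and eq: "\<forall>w\<in>infwords d. pre Q (aut_inf g w) = pre Q' (aut_inf g' w)"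
    and l: "length Q < length Q'"
  shows False
proof -
  have c: "aut_inf g w 0 = Q' ! length Q" if "w \<in> infwords d" for w
  proof -
    have "pre Q (aut_inf g w) (length Q) = pre Q' (aut_inf g' w) (length Q)" using eq that by simp
    then show ?thesis using l by (simp add: pre_def)
  qed
  have w1: "(\<lambda>_. 1) \<in> infwords d" and w2: "(\<lambda>_. 2) \<in> infwords d" using d by (auto simp: infwords_def)
  have a: "aut_inf g w 0 = g [w 0] ! 0" for w by (simp add: aut_inf_def stake_def)
  obtain y1 where y1: "g [1] = [y1]" using taut_single[OF t, of 1] d by auto
  obtain y2 where y2: "g [2] = [y2]" using taut_single[OF t, of 2] d by auto
  have "y1 = y2" using c[OF w1] c[OF w2] a[of "\<lambda>_. 1"] a[of "\<lambda>_. 2"] y1 y2 by simp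
  then have "g [1] = g [2]" using y1 y2 by simp
  moreover have "[1] \<in> words d" "[2] \<in> words d" using d by (auto simp: words_def)
  ultimately have "[1::nat] = [2]" using t unfolding tree_aut_def bij_betw_def inj_on_def by blast
  then show False by simp
qed

lemma vt_ne: "valid_triple d G Tm \<sigma> gs Tp \<Longrightarrow> d \<ge> 1 \<Longrightarrow> aut_subgroup d G \<Longrightarrow> tree_aut d (last gs)"
proof -
  assume V: "valid_triple d G Tm \<sigma> gs Tp" and d: "d \<ge> 1" and G: "aut_subgroup d G"
  have fp: "fcr_subtree d Tp" using V by (simp add: valid_triple_def)
  obtain k where kl: "replicate k d \<in> leaves Tp" using leaf_rep[OF fp d] by blast
  have finl: "finite (leaves Tp)" using fp by (simp add: fcr_subtree_def leaves_def)
  have "card (leaves Tp) \<noteq> 0" using finl kl by auto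
  then have "gs \<noteq> []" using V by (auto simp: valid_triple_def)
  then have "last gs \<in> G" using V by (auto simp: valid_triple_def)
  then show ?thesis using G by (simp add: aut_subgroup_def)
qed

theorem lemma5p4:
  fixes d :: nat and G :: "(nat list \<Rightarrow> nat list) set"
    and Tm Tp Tm' Tp' :: "nat list set" and \<sigma> \<sigma>' :: "nat \<Rightarrow> nat"
    and gs gs' :: "(nat list \<Rightarrow> nat list) list"
  assumes "d \<ge> 2"
    and "aut_subgroup d G" and "self_similar d G" and "persistent d G"
    and "valid_triple d G Tm \<sigma> gs Tp" and "valid_triple d G Tm' \<sigma>' gs' Tp'"
    and "\<forall>w\<in>infwords d. triple_map Tm \<sigma> gs Tp w = triple_map Tm' \<sigma>' gs' Tp' w"
  shows "last gs = last gs'"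
proof -
  note d = assms(1)
  obtain k where k: "\<forall>K\<ge>k. \<exists>Q. \<forall>w\<in>infwords d.
     triple_map Tm \<sigma> gs Tp (pre (replicate K d) w) = pre Q (aut_inf (last gs) w)"
    using triple_last[OF assms(1,2,4,5)] by blast
  obtain k' where k': "\<forall>K\<ge>k'. \<exists>Q. \<forall>w\<in>infwords d.
     triple_map Tm' \<sigma>' gs' Tp' (pre (replicate K d) w) = pre Q (aut_inf (last gs') w)"
    using triple_last[OF assms(1,2,4,6)] by blast
  define K where "K = max k k'"
  obtain Q where Q: "\<forall>w\<in>infwords d.
     triple_map Tm \<sigma> gs Tp (pre (replicate K d) w) = pre Q (aut_inf (last gs) w)"
    using k[rule_format, of K] K_def by auto
  obtain Q' where Q': "\<forall>w\<in>infwords d.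
     triple_map Tm' \<sigma>' gs' Tp' (pre (replicate K d) w) = pre Q' (aut_inf (last gs') w)"
    using k'[rule_format, of K] K_def by auto
  have rK: "replicate K d \<in> words d" using d by (auto simp: words_def)
  have eq: "\<forall>w\<in>infwords d. pre Q (aut_inf (last gs) w) = pre Q' (aut_inf (last gs') w)"
    using Q Q' assms(7) pre_inf[OF rK] by metis
  have tg: "tree_aut d (last gs)" and tg': "tree_aut d (last gs')"
    using vt_ne assms(2,5,6) d by auto
  show ?thesis
  proof (cases "length Q = length Q'")
    case True
    have "\<forall>w\<in>infwords d. aut_inf (last gs) w = aut_inf (last gs') w"
    proof
      fix w assume w: "w \<in> infwords d"
      show "aut_inf (last gs) w = aut_inf (last gs') w"
      proof
        fix j
        have "pre Q (aut_inf (last gs) w) (j + length Q) = pre Q' (aut_inf (last gs') w) (j + length Q)"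
          using eq w by simp
        then show "aut_inf (last gs) w j = aut_inf (last gs') w j" using True by (simp add: pre_def)
      qed
    qed
    then show ?thesis using aut_inf_det[OF tg tg'] d by simp
  next
    case False
    then consider "length Q < length Q'" | "length Q' < length Q" by linarith
    then show ?thesis
    proof cases
      case 1 then show ?thesis using pre_shift_const[OF d tg eq] by blast
    next
      case 2 then show ?thesis using pre_shift_const[OF d tg'] eq by metis
    qed
  qed
qed

end
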